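(* Let $a_1,\dots,a_N\ge0$, let $b_1,\dots,b_N>0$ be pairwise distinct, $a=\sum_ja_j$, and $K(t)=\sum_{j=1}^Na_jK_j(t)$ with $K_j(t)=\sum_{i=1}^jb_i\psi_i^je^{-b_it}$, $\psi_i^j=\prod_{k=1,k\neq i}^j\frac{b_k}{b_k-b_i}$. Let $u$ solve $\dot u(t)=-au(t)+\int_0^tK(t-s)u(s)\,ds$, $u(0)=u_0$. Then $u(t)\to u_0/Z$ as $t\to\infty$, where $Z=1+\sum_{i=1}^N\frac1{b_i}\sum_{j=i}^Na_j$. *)

theory Defs
  imports "HOL-Analysis.Analysis"
begin

definition psi :: "(nat \<Rightarrow> real) \<Rightarrow> nat \<Rightarrow> nat \<Rightarrow> real" where
  "psi b i j = (\<Prod>k\<in>{1..j} - {i}. b k / (b k - b i))"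

definition Kj :: "(nat \<Rightarrow> real) \<Rightarrow> nat \<Rightarrow> real \<Rightarrow> real" where
  "Kj b j t = (\<Sum>i=1..j. b i * psi b i j * exp (- b i * t))"

definition Kker :: "nat \<Rightarrow> (nat \<Rightarrow> real) \<Rightarrow> (nat \<Rightarrow> real) \<Rightarrow> real \<Rightarrow> real" where
  "Kker N a b t = (\<Sum>j=1..N. a j * Kj b j t)"

end

theory Submission
  imports Defs
begin


lemma psi_Suc:
  assumes "k \<in> {1..n}" 
  shows "psi b k (Suc n) = psi b k n * (b (Suc n) / (b (Suc n) - b k))"
proof -
  have "{1..Suc n} - {k} = insert (Suc n) ({1..n} - {k})" using assms by auto
  moreover have "Suc n \<notin> {1..n} - {k}" by auto
  ultimately show ?thesis unfolding psi_def by (simp add: mult.commute)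
qed

lemma psi_diag: "psi b (Suc n) (Suc n) = (\<Prod>m=1..n. b m / (b m - b (Suc n)))"
proof -
  have "{1..Suc n} - {Suc n} = {1..n}" by auto
  thus ?thesis unfolding psi_def by simp
qed

lemma psi_one: "psi b (Suc 0) (Suc 0) = 1"
  unfolding psi_def by simp

lemma aux_pf:
  fixes p x c s :: real
  assumes "x \<noteq> c" "c + s \<noteq> 0" "x + s \<noteq> 0"
  shows "p * (c / (c - x)) / (x + s) = c / (c + s) * (p / (x + s)) - c / (c + s) * (p / (x + - c))"
proof -
  have h: "c - x \<noteq> 0" "x - c \<noteq> 0" using assms by auto
  have e: "x + - c = - (c - x)" by simp
  show ?thesis unfolding e using h assms
    by (simp add: divide_simps) (simp add: algebra_simps)
qed

lemma laplace:
  assumes "n \<ge> 1" "inj_on b {1..n}" "\<And>k. k \<in> {1..n} \<Longrightarrow> b k + s \<noteq> 0"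
  shows "(\<Sum>k=1..n. b k * psi b k n / (b k + s)) = (\<Prod>m=1..n. b m / (b m + s))"
  using assms
proof (induction n arbitrary: s rule: nat_induct_at_least)
  case base
  then show ?case by (simp add: psi_one)
next
  case (Suc n)
  define b' where "b' = b (Suc n)"
  have inj: "inj_on b {1..n}" using Suc.prems(1) by (rule inj_on_subset) auto
  have ne: "b k \<noteq> b'" if "k \<in> {1..n}" for k
  proof
    assume "b k = b'"
    then have "k = Suc n" using Suc.prems(1) that unfolding b'_def by (auto dest: inj_onD)
    thus False using that by auto
  qed
  have sne: "b' + s \<noteq> 0" using Suc.prems(2)[of "Suc n"] b'_def by auto
  have kne: "b k + s \<noteq> 0" if "k \<in> {1..n}" for k using Suc.prems(2) that by auto
  have IH1: "(\<Sum>k=1..n. b k * psi b k n / (b k + s)) = (\<Prod>m=1..n. b m / (b m + s))"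
    using Suc.IH[OF inj] kne by auto
  have ne2: "\<And>k. k \<in> {1..n} \<Longrightarrow> b k + - b' \<noteq> 0" using ne by force
  have IH2: "(\<Sum>k=1..n. b k * psi b k n / (b k + - b')) = (\<Prod>m=1..n. b m / (b m + - b'))"
    by (rule Suc.IH[OF inj ne2])
  have diag: "psi b (Suc n) (Suc n) = (\<Prod>m=1..n. b m / (b m + - b'))"
    unfolding psi_diag b'_def by simp
  have tm: "b k * psi b k (Suc n) / (b k + s)
      = b' / (b' + s) * (b k * psi b k n / (b k + s)) - b' / (b' + s) * (b k * psi b k n / (b k + - b'))"
    if "k \<in> {1..n}" for k
  proof -
    have h: "b k - b' \<noteq> 0" "b' - b k \<noteq> 0" using ne[OF that] by auto
    show ?thesis unfolding psi_Suc[OF that] b'_def[symmetric] mult.assoc[symmetric]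
      by (rule aux_pf) (use ne[OF that] sne kne[OF that] in auto)
  qed
  have "(\<Sum>k=1..Suc n. b k * psi b k (Suc n) / (b k + s))
      = (\<Sum>k=1..n. b k * psi b k (Suc n) / (b k + s)) + b' * psi b (Suc n) (Suc n) / (b' + s)"
    by (simp add: b'_def)
  also have "(\<Sum>k=1..n. b k * psi b k (Suc n) / (b k + s))
      = b' / (b' + s) * (\<Sum>k=1..n. b k * psi b k n / (b k + s)) - b' / (b' + s) * (\<Sum>k=1..n. b k * psi b k n / (b k + - b'))"
    by (simp add: tm sum_subtractf sum_distrib_left)
  finally show ?case using IH1 IH2 diag sne
    by (simp add: b'_def field_simps)
qed

lemma S_zero:
  assumes "n \<ge> 1" "inj_on b {1..Suc n}"
  shows "(\<Sum>k=1..Suc n. b k * psi b k (Suc n)) = 0"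
proof -
  define b' where "b' = b (Suc n)"
  have inj: "inj_on b {1..n}" using assms(2) by (rule inj_on_subset) auto
  have ne: "b k \<noteq> b'" if "k \<in> {1..n}" for k
  proof
    assume "b k = b'"
    then have "k = Suc n" using assms(2) that unfolding b'_def by (auto dest: inj_onD)
    thus False using that by auto
  qed
  have ne2: "\<And>k. k \<in> {1..n} \<Longrightarrow> b k + - b' \<noteq> 0" using ne by force
  have L: "(\<Sum>k=1..n. b k * psi b k n / (b k + - b')) = (\<Prod>m=1..n. b m / (b m + - b'))"
    by (rule laplace[OF assms(1) inj ne2])
  have diag: "psi b (Suc n) (Suc n) = (\<Prod>m=1..n. b m / (b m + - b'))"
    unfolding psi_diag b'_def by simp
  have tm: "b k * psi b k (Suc n) = - b' * (b k * psi b k n / (b k + - b'))" if "k \<in> {1..n}" for k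
  proof -
    have h: "b k - b' \<noteq> 0" "b' - b k \<noteq> 0" using ne[OF that] by auto
    show ?thesis unfolding psi_Suc[OF that] b'_def[symmetric]
      using h by (simp add: field_simps)
  qed
  have "(\<Sum>k=1..Suc n. b k * psi b k (Suc n)) = (\<Sum>k=1..n. b k * psi b k (Suc n)) + b' * psi b (Suc n) (Suc n)"
    by (simp add: b'_def)
  also have "(\<Sum>k=1..n. b k * psi b k (Suc n)) = - b' * (\<Sum>k=1..n. b k * psi b k n / (b k + - b'))"
    by (simp add: tm sum_distrib_left)
  finally show ?thesis using L diag by simp
qed



lemma F_deriv_alg:
  assumes "j \<ge> 1" "inj_on b {1..j}"
  shows "(\<Sum>k=1..j. b k * psi b k j * (uv - b k * Gv k)) =
    b j * ((if j = 1 then uv else (\<Sum>k=1..j-1. b k * psi b k (j-1) * Gv k)) - (\<Sum>k=1..j. b k * psi b k j * Gv k))"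
proof (cases "j = 1")
  case True
  then show ?thesis using psi_one[of b] by (simp add: algebra_simps)
next
  case False
  then obtain n where n: "j = Suc n" "n \<ge> 1" using assms(1) by (cases j) auto
  define b' where "b' = b (Suc n)"
  have ne: "b k \<noteq> b'" if "k \<in> {1..n}" for k
  proof
    assume "b k = b'"
    then have "k = Suc n" using assms(2) that unfolding b'_def n by (auto dest: inj_onD)
    thus False using that by auto
  qed
  have S: "(\<Sum>k=1..Suc n. b k * psi b k (Suc n)) = 0" using S_zero[OF n(2)] assms(2) n by simp
  have "(\<Sum>k=1..j. b k * psi b k j * (uv - b k * Gv k)) =
      (\<Sum>k=1..j. b k * psi b k j) * uv - (\<Sum>k=1..j. b k * b k * psi b k j * Gv k)"
    by (simp add: sum_distrib_right sum_distrib_left sum_subtractf algebra_simps)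
  also have "\<dots> = - (\<Sum>k=1..Suc n. b k * b k * psi b k (Suc n) * Gv k)" using S n by simp
  also have "(\<Sum>k=1..Suc n. b k * b k * psi b k (Suc n) * Gv k)
     = (\<Sum>k=1..n. b k * b k * psi b k (Suc n) * Gv k) + b' * b' * psi b (Suc n) (Suc n) * Gv (Suc n)"
    by (simp add: b'_def)
  also have "(\<Sum>k=1..n. b k * b k * psi b k (Suc n) * Gv k)
     = (\<Sum>k=1..n. b' * (b k * psi b k (Suc n) * Gv k) - b' * (b k * psi b k n * Gv k))"
  proof (rule sum.cong[OF refl])
    fix k assume k: "k \<in> {1..n}"
    have h: "b' - b k \<noteq> 0" using ne[OF k] by auto
    show "b k * b k * psi b k (Suc n) * Gv k = b' * (b k * psi b k (Suc n) * Gv k) - b' * (b k * psi b k n * Gv k)"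
      unfolding psi_Suc[OF k] b'_def[symmetric] using h by (simp add: field_simps)
  qed
  also have "\<dots> = b' * (\<Sum>k=1..n. b k * psi b k (Suc n) * Gv k) - b' * (\<Sum>k=1..n. b k * psi b k n * Gv k)"
    by (simp add: sum_subtractf sum_distrib_left)
  finally show ?thesis using n False by (simp add: b'_def algebra_simps)
qed

lemma chain_ident:
  fixes x :: "nat \<Rightarrow> real"
  shows "- ((x 0 - c)^2) + (x 0 - c) * (x j - c) + (\<Sum>i=1..j. (x i - c) * (x (i-1) - x i))
     = - (1/2) * ((\<Sum>i=1..j. (x (i-1) - x i)^2) + (x j - x 0)^2)"
proof (induction j)
  case 0
  then show ?case by (simp add: power2_eq_square)
next
  case (Suc j)
  then show ?case by (simp add: power2_eq_square algebra_simps)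
qed

lemma telescope: fixes x :: "nat \<Rightarrow> real" shows "(\<Sum>m=1..i. x m - x (m-1)) = x i - x 0"
  by (induction i) auto

lemma telescope_sq:
  fixes x :: "nat \<Rightarrow> real"
  shows "(x i - x 0)^2 \<le> real i * (\<Sum>m=1..i. (x (m-1) - x m)^2)"
proof -
  have "(x i - x 0)^2 = (\<Sum>m=1..i. x m - x (m-1))^2" using telescope[of x i] by simp
  also have "\<dots> \<le> (\<Sum>m=1..i. (x m - x (m-1))^2) * real (card {1..i})"
    by (rule sum_squared_le_sum_of_squares)
  also have "(\<Sum>m=1..i. (x m - x (m-1))^2) = (\<Sum>m=1..i. (x (m-1) - x m)^2)"
    by (simp add: power2_commute)
  finally show ?thesis by (simp add: mult.commute)
qed



lemma lyap:
  fixes x a b :: "nat \<Rightarrow> real" and c :: real and N :: nat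
  assumes a: "\<And>j. j \<in> {1..N} \<Longrightarrow> a j \<ge> 0" and b: "\<And>j. j \<in> {1..N} \<Longrightarrow> b j > 0"
    and mean: "(x 0 - c) + (\<Sum>j=1..N. a j * (\<Sum>i=1..j. (x i - c) / b i)) = 0"
  shows "2 * (x 0 - c) * (- (\<Sum>j=1..N. a j) * x 0 + (\<Sum>j=1..N. a j * x j))
      + (\<Sum>j=1..N. a j * (\<Sum>i=1..j. 2 * (x i - c) * (x (i-1) - x i)))
    \<le> - ((x 0 - c)^2 + (\<Sum>j=1..N. a j * (\<Sum>i=1..j. (x i - c)^2 / b i))) / (1 + (\<Sum>i=1..N. real i / b i))"
proof -
  define P where "P j = (\<Sum>i=1..j. (x (i-1) - x i)^2)" for j
  define C where "C = 1 + (\<Sum>i=1..N. real i / b i)"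
  define V where "V = (x 0 - c)^2 + (\<Sum>j=1..N. a j * (\<Sum>i=1..j. (x i - c)^2 / b i))"
  define e0 where "e0 = x 0 - c"
  define S where "S = (\<Sum>j=1..N. a j * P j)"
  have Pnn: "P j \<ge> 0" for j unfolding P_def by (rule sum_nonneg) auto
  have Cpos0: "(\<Sum>i=1..N. real i / b i) \<ge> 0"
    by (rule sum_nonneg) (use b in \<open>auto intro: divide_nonneg_pos\<close>)
  hence Cpos: "C > 0" unfolding C_def by simp
  have Snn: "S \<ge> 0" unfolding S_def by (rule sum_nonneg) (use a Pnn in auto)
  have lin: "- (\<Sum>j=1..N. a j) * x 0 + (\<Sum>j=1..N. a j * x j) = (\<Sum>j=1..N. a j * (x j - x 0))"
    by (simp add: sum_distrib_right right_diff_distrib sum_subtractf)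
  have "2 * (x 0 - c) * (- (\<Sum>j=1..N. a j) * x 0 + (\<Sum>j=1..N. a j * x j))
      + (\<Sum>j=1..N. a j * (\<Sum>i=1..j. 2 * (x i - c) * (x (i-1) - x i)))
     = (\<Sum>j=1..N. a j * (2 * (- ((x 0 - c)^2) + (x 0 - c) * (x j - c) + (\<Sum>i=1..j. (x i - c) * (x (i-1) - x i)))))"
    unfolding lin sum_distrib_left sum.distrib[symmetric]
    by (rule sum.cong[OF refl]) (simp add: sum_distrib_left power2_eq_square algebra_simps)
  also have "\<dots> = - (\<Sum>j=1..N. a j * (P j + (x j - x 0)^2))"
    unfolding chain_ident P_def sum_negf[symmetric] by (rule sum.cong[OF refl]) (simp add: algebra_simps)
  also have "\<dots> \<le> - S" unfolding S_def
  proof -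
    have "(\<Sum>j=1..N. a j * P j) \<le> (\<Sum>j=1..N. a j * (P j + (x j - x 0)^2))"
      by (rule sum_mono) (use a in \<open>auto intro!: mult_left_mono\<close>)
    thus "- (\<Sum>j=1..N. a j * (P j + (x j - x 0)^2)) \<le> - (\<Sum>j=1..N. a j * P j)" by simp
  qed
  finally have D: "2 * (x 0 - c) * (- (\<Sum>j=1..N. a j) * x 0 + (\<Sum>j=1..N. a j * x j))
      + (\<Sum>j=1..N. a j * (\<Sum>i=1..j. 2 * (x i - c) * (x (i-1) - x i))) \<le> - S" .
  define R where "R = (\<Sum>j=1..N. a j * (\<Sum>i=1..j. (x i - x 0)^2 / b i))"
  define T where "T = (\<Sum>j=1..N. a j * (\<Sum>i=1..j. 1 / b i))"
  have Tnn: "T \<ge> 0" unfolding T_def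
  proof (rule sum_nonneg)
    fix j assume j: "j \<in> {1..N}"
    have "(\<Sum>i=1..j. 1 / b i) \<ge> 0"
    proof (rule sum_nonneg)
      fix i assume "i \<in> {1..j}" 
      hence "b i > 0" using b j by auto
      thus "1 / b i \<ge> 0" by simp
    qed
    thus "a j * (\<Sum>i=1..j. 1 / b i) \<ge> 0" using a[OF j] by simp
  qed
  have "R = (\<Sum>j=1..N. a j * (\<Sum>i=1..j. (x i - c)^2 / b i)) - 2 * e0 * (\<Sum>j=1..N. a j * (\<Sum>i=1..j. (x i - c) / b i)) + e0^2 * T"
  proof -
    have eq: "(x i - x 0)^2 / b i = (x i - c)^2 / b i - 2 * e0 * ((x i - c) / b i) + e0^2 * (1 / b i)" for i
    proof -
      have "(x i - x 0)^2 = (x i - c)^2 - 2 * e0 * (x i - c) + e0^2" unfolding e0_def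
        by (simp add: power2_eq_square algebra_simps)
      thus ?thesis by (simp add: diff_divide_distrib add_divide_distrib right_diff_distrib)
    qed
    have inner: "(\<Sum>i=1..j. (x i - x 0)^2 / b i) = (\<Sum>i=1..j. (x i - c)^2 / b i) - 2 * e0 * (\<Sum>i=1..j. (x i - c) / b i) + e0^2 * (\<Sum>i=1..j. 1 / b i)" for j
      by (simp only: eq sum.distrib sum_subtractf sum_distrib_left)
    have "R = (\<Sum>j=1..N. a j * (\<Sum>i=1..j. (x i - c)^2 / b i) - 2 * e0 * (a j * (\<Sum>i=1..j. (x i - c) / b i)) + e0^2 * (a j * (\<Sum>i=1..j. 1 / b i)))"
      unfolding R_def inner by (rule sum.cong[OF refl]) (simp add: algebra_simps)
    also have "\<dots> = (\<Sum>j=1..N. a j * (\<Sum>i=1..j. (x i - c)^2 / b i)) - 2 * e0 * (\<Sum>j=1..N. a j * (\<Sum>i=1..j. (x i - c) / b i)) + e0^2 * T"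
      unfolding T_def by (simp only: sum.distrib sum_subtractf sum_distrib_left)
    finally show ?thesis .
  qed
  moreover have M: "(\<Sum>j=1..N. a j * (\<Sum>i=1..j. (x i - c) / b i)) = - e0" using mean unfolding e0_def by simp
  ultimately have "R = V + e0^2 * (1 + T)" unfolding V_def e0_def[symmetric] by (simp add: algebra_simps power2_eq_square)
  hence VR: "V \<le> R" using Tnn by (simp add: add_increasing2)
  have RS: "R \<le> C * S"
  proof -
    have "a j * (\<Sum>i=1..j. (x i - x 0)^2 / b i) \<le> C * (a j * P j)" if j: "j \<in> {1..N}" for j
    proof -
      have "(\<Sum>i=1..j. (x i - x 0)^2 / b i) \<le> (\<Sum>i=1..j. real i / b i * P j)"
      proof (rule sum_mono)
        fix i assume i: "i \<in> {1..j}"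
        have bi: "b i > 0" using b i j by auto
        have "(x i - x 0)^2 \<le> real i * P i" unfolding P_def by (rule telescope_sq)
        also have "P i \<le> P j" unfolding P_def by (rule sum_mono2) (use i in auto)
        hence "real i * P i \<le> real i * P j" by (simp add: mult_left_mono)
        finally show "(x i - x 0)^2 / b i \<le> real i / b i * P j" using bi
          by (simp add: divide_right_mono)
      qed
      also have "\<dots> = (\<Sum>i=1..j. real i / b i) * P j" by (simp add: sum_distrib_right)
      also have "\<dots> \<le> C * P j"
      proof (rule mult_right_mono[OF _ Pnn])
        have "(\<Sum>i=1..j. real i / b i) \<le> (\<Sum>i=1..N. real i / b i)"
          by (rule sum_mono2) (use j b in \<open>auto intro: divide_nonneg_pos\<close>)
        thus "(\<Sum>i=1..j. real i / b i) \<le> C" unfolding C_def by simp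
      qed
      finally have "(\<Sum>i=1..j. (x i - x 0)^2 / b i) \<le> C * P j" .
      from mult_left_mono[OF this a[OF j]] show ?thesis by (simp add: mult.left_commute)
    qed
    hence "R \<le> (\<Sum>j=1..N. C * (a j * P j))" unfolding R_def by (rule sum_mono)
    thus ?thesis unfolding S_def by (simp add: sum_distrib_left)
  qed
  have "V / C \<le> S" using VR RS Cpos by (simp add: pos_divide_le_eq mult.commute)
  with D have "2 * (x 0 - c) * (- (\<Sum>j=1..N. a j) * x 0 + (\<Sum>j=1..N. a j * x j))
      + (\<Sum>j=1..N. a j * (\<Sum>i=1..j. 2 * (x i - c) * (x (i-1) - x i))) \<le> - (V / C)" by linarith
  thus ?thesis unfolding V_def C_def by (simp only: minus_divide_left)
qed



lemma swap_sum: fixes a b :: "nat \<Rightarrow> real" shows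
  "(\<Sum>i=1..N. (1 / b i) * (\<Sum>j=i..N. a j)) = (\<Sum>j=1..N. a j * (\<Sum>i=1..j. 1 / b i))"
proof (induction N)
  case 0 then show ?case by simp
next
  case (Suc N)
  have "(\<Sum>i=1..Suc N. (1 / b i) * (\<Sum>j=i..Suc N. a j)) = (\<Sum>i=1..Suc N. (1 / b i) * (\<Sum>j=i..N. a j) + a (Suc N) * (1 / b i))"
    by (rule sum.cong[OF refl]) (auto simp: algebra_simps)
  also have "\<dots> = (\<Sum>i=1..Suc N. (1 / b i) * (\<Sum>j=i..N. a j)) + (\<Sum>i=1..Suc N. a (Suc N) * (1 / b i))"
    by (simp only: sum.distrib)
  also have "\<dots> = (\<Sum>i=1..N. (1 / b i) * (\<Sum>j=i..N. a j)) + a (Suc N) * (\<Sum>i=1..Suc N. 1 / b i)"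
  proof -
    have "(\<Sum>i=1..Suc N. (1 / b i) * (\<Sum>j=i..N. a j)) = (\<Sum>i=1..N. (1 / b i) * (\<Sum>j=i..N. a j))" by simp
    moreover have "(\<Sum>i=1..Suc N. a (Suc N) * (1 / b i)) = a (Suc N) * (\<Sum>i=1..Suc N. 1 / b i)"
      by (rule sum_distrib_left[symmetric])
    ultimately show ?thesis by simp
  qed
  finally have e1: "(\<Sum>i=1..Suc N. (1 / b i) * (\<Sum>j=i..Suc N. a j)) = (\<Sum>i=1..N. (1 / b i) * (\<Sum>j=i..N. a j)) + a (Suc N) * (\<Sum>i=1..Suc N. 1 / b i)" .
  have e2: "(\<Sum>j=1..Suc N. a j * (\<Sum>i=1..j. 1/b i)) = (\<Sum>j=1..N. a j * (\<Sum>i=1..j. 1/b i)) + a (Suc N) * (\<Sum>i=1..Suc N. 1/b i)"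
    by (simp only: sum.cl_ivl_Suc) simp
  show ?case using e1 e2 Suc.IH by linarith
qed

lemma G_deriv:
  fixes u :: "real \<Rightarrow> real" and \<beta> t :: real
  assumes cont: "continuous_on {0..} u" and t: "t > 0"
  shows "((\<lambda>t. exp (- \<beta> * t) * integral {0..t} (\<lambda>s. exp (\<beta> * s) * u s)) has_real_derivative
     (u t - \<beta> * (exp (- \<beta> * t) * integral {0..t} (\<lambda>s. exp (\<beta> * s) * u s)))) (at t)"
proof -
  have c: "continuous_on {0..t+1} (\<lambda>s. exp (\<beta> * s) * u s)"
    by (intro continuous_intros continuous_on_subset[OF cont]) auto
  have "((\<lambda>x. integral {0..x} (\<lambda>s. exp (\<beta> * s) * u s)) has_real_derivative exp (\<beta> * t) * u t) (at t within {0..t+1})"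
    by (rule integral_has_real_derivative[OF c]) (use t in auto)
  hence I: "((\<lambda>x. integral {0..x} (\<lambda>s. exp (\<beta> * s) * u s)) has_real_derivative exp (\<beta> * t) * u t) (at t)"
    using at_within_Icc_at[of 0 t "t+1"] t by simp
  have E: "((\<lambda>t. exp (- \<beta> * t)) has_real_derivative (exp (- \<beta> * t) * (- \<beta>))) (at t)"
    by (auto intro!: derivative_eq_intros)
  have D1: "((\<lambda>t. exp (- \<beta> * t) * integral {0..t} (\<lambda>s. exp (\<beta> * s) * u s)) has_real_derivative
     (exp (- \<beta> * t) * (- \<beta>) * integral {0..t} (\<lambda>s. exp (\<beta> * s) * u s) + exp (\<beta> * t) * u t * exp (- \<beta> * t))) (at t)"
    by (rule DERIV_mult[OF E I])
  have ee: "exp (- \<beta> * t) * exp (\<beta> * t) = 1" by (simp add: exp_add[symmetric])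
  have eq: "exp (- \<beta> * t) * (- \<beta>) * integral {0..t} (\<lambda>s. exp (\<beta> * s) * u s) + exp (\<beta> * t) * u t * exp (- \<beta> * t)
     = u t - \<beta> * (exp (- \<beta> * t) * integral {0..t} (\<lambda>s. exp (\<beta> * s) * u s))"
  proof -
    have "exp (\<beta> * t) * u t * exp (- \<beta> * t) = u t * (exp (- \<beta> * t) * exp (\<beta> * t))" by (simp only: ac_simps)
    moreover have "exp (\<beta> * t) * exp (- \<beta> * t) = 1" by (simp add: exp_add[symmetric])
    ultimately show ?thesis using ee by simp
  qed
  show ?thesis by (rule DERIV_cong[OF D1 eq])
qed

lemma G_cont:
  fixes u :: "real \<Rightarrow> real" and \<beta> y :: real
  assumes cont: "continuous_on {0..} u"
  shows "continuous_on {0..y} (\<lambda>t. exp (- \<beta> * t) * integral {0..t} (\<lambda>s. exp (\<beta> * s) * u s))"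
proof -
  have c: "continuous_on {0..y} (\<lambda>s. exp (\<beta> * s) * u s)"
    by (intro continuous_intros continuous_on_subset[OF cont]) auto
  show ?thesis
    by (intro continuous_intros indefinite_integral_continuous_1 integrable_continuous_interval c)
qed


lemma sq_deriv:
  assumes "(f has_real_derivative D) (at t)"
  shows "((\<lambda>t. (f t - c)^2) has_real_derivative (2 * (f t - c) * D)) (at t)"
proof -
  have "((\<lambda>t. (f t - c) * (f t - c)) has_real_derivative ((f t - c) * D + D * (f t - c))) (at t)"
  proof -
    have d: "((\<lambda>t. f t - c) has_real_derivative D) (at t)" using DERIV_diff[OF assms DERIV_const[of c]] by simp
    show ?thesis by (rule DERIV_cong[OF DERIV_mult[OF d d]]) (simp add: algebra_simps)
  qed
  thus ?thesis by (simp add: power2_eq_square algebra_simps)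
qed

lemma exp_lim: "(C::real) > 0 \<Longrightarrow> ((\<lambda>t. exp (- t / C)) \<longlongrightarrow> 0) at_top"
proof -
  assume C: "C > 0"
  have "filterlim (\<lambda>t. (1 / C) * t) at_top at_top"
    using C by (intro filterlim_tendsto_pos_mult_at_top[OF tendsto_const] filterlim_ident) auto
  hence "filterlim (\<lambda>t. - (t / C)) at_bot at_top"
    by (simp add: filterlim_uminus_at_top)
  from filterlim_compose[OF exp_at_bot this] show ?thesis by simp
qed

theorem mainTheorem5:
  fixes N :: nat and a b :: "nat \<Rightarrow> real" and u :: "real \<Rightarrow> real" and u0 :: real
  assumes a_nonneg: "\<And>j. j \<in> {1..N} \<Longrightarrow> a j \<ge> 0"
    and b_pos: "\<And>j. j \<in> {1..N} \<Longrightarrow> b j > 0"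
    and b_distinct: "inj_on b {1..N}"
    and u_init: "u 0 = u0"
    and u_ode: "\<And>t. t \<ge> 0 \<Longrightarrow>
       (u has_real_derivative
          (- (\<Sum>j=1..N. a j) * u t + integral {0..t} (\<lambda>s. Kker N a b (t - s) * u s)))
       (at t within {0..})"
  shows "(u \<longlongrightarrow> u0 / (1 + (\<Sum>i=1..N. (1 / b i) * (\<Sum>j=i..N. a j)))) at_top"
proof -
  define A where "A = (\<Sum>j=1..N. a j)"
  have bpos': "b i > 0" if "j \<in> {1..N}" "i \<in> {1..j}" for i j using b_pos that by auto
  have ucont: "continuous_on {0..} u"
    unfolding continuous_on_eq_continuous_within using u_ode by (auto intro: DERIV_continuous)
  have ucont': "continuous_on {0..y} u" for y by (rule continuous_on_subset[OF ucont]) auto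
  define G where "G k t = exp (- b k * t) * integral {0..t} (\<lambda>s. exp (b k * s) * u s)" for k t
  define F where "F j t = (\<Sum>k=1..j. b k * psi b k j * G k t)" for j t
  define X where "X t i = (if i = 0 then u t else F i t)" for t i
  have Gd: "(G k has_real_derivative (u t - b k * G k t)) (at t)" if "t > 0" for k t
    unfolding G_def[abs_def] by (rule G_deriv[OF ucont that])
  have Gc: "continuous_on {0..y} (G k)" for k y
    unfolding G_def[abs_def] by (rule G_cont[OF ucont])
  have G0: "G k 0 = 0" for k unfolding G_def by simp
  have Fc: "continuous_on {0..y} (F j)" for j y
    unfolding F_def by (intro continuous_intros Gc)
  have F0: "F j 0 = 0" for j unfolding F_def by (simp add: G0)
  have Fd: "(F j has_real_derivative (b j * (X t (j-1) - F j t))) (at t)" if "t > 0" "j \<in> {1..N}" for j t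
  proof -
    have "(F j has_real_derivative (\<Sum>k=1..j. b k * psi b k j * (u t - b k * G k t))) (at t)"
      unfolding F_def[abs_def] by (intro DERIV_sum DERIV_cmult Gd that)
    moreover have "(\<Sum>k=1..j. b k * psi b k j * (u t - b k * G k t)) = b j * (X t (j-1) - F j t)"
    proof -
      have inj: "inj_on b {1..j}" by (rule inj_on_subset[OF b_distinct]) (use that in auto)
      have j1: "j \<ge> 1" using that by auto
      show ?thesis unfolding F_deriv_alg[OF j1 inj] X_def F_def using j1 by auto
    qed
    ultimately show ?thesis by simp
  qed
  have ud: "(u has_real_derivative (- A * u t + (\<Sum>j=1..N. a j * F j t))) (at t)" if "t > 0" for t
  proof -
    have conv: "integral {0..t} (\<lambda>s. Kker N a b (t - s) * u s) = (\<Sum>j=1..N. a j * F j t)"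
    proof -
      have pt: "Kker N a b (t - s) * u s = (\<Sum>j=1..N. \<Sum>k=1..j. (a j * (b k * psi b k j * exp (- b k * t))) * (exp (b k * s) * u s))" for s
      proof -
        have "exp (- b k * (t - s)) = exp (- b k * t) * exp (b k * s)" for k
          by (simp add: exp_add[symmetric] algebra_simps)
        thus ?thesis unfolding Kker_def Kj_def
          by (simp add: sum_distrib_left sum_distrib_right algebra_simps)
      qed
      have int: "(\<lambda>s. exp (b k * s) * u s) integrable_on {0..t}" for k
        by (intro integrable_continuous_interval continuous_intros ucont')
      have "integral {0..t} (\<lambda>s. Kker N a b (t - s) * u s) = (\<Sum>j=1..N. \<Sum>k=1..j. (a j * (b k * psi b k j * exp (- b k * t))) * integral {0..t} (\<lambda>s. exp (b k * s) * u s))"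
      proof -
        have "integral {0..t} (\<lambda>s. Kker N a b (t - s) * u s) = (\<Sum>j=1..N. integral {0..t} (\<lambda>s. \<Sum>k=1..j. (a j * (b k * psi b k j * exp (- b k * t))) * (exp (b k * s) * u s)))"
          unfolding pt by (rule integral_sum) (auto intro!: integrable_sum integrable_on_mult_right int)
        also have "\<dots> = (\<Sum>j=1..N. \<Sum>k=1..j. integral {0..t} (\<lambda>s. (a j * (b k * psi b k j * exp (- b k * t))) * (exp (b k * s) * u s)))"
          by (rule sum.cong[OF refl], rule integral_sum) (auto intro!: integrable_on_mult_right int)
        also have "\<dots> = (\<Sum>j=1..N. \<Sum>k=1..j. (a j * (b k * psi b k j * exp (- b k * t))) * integral {0..t} (\<lambda>s. exp (b k * s) * u s))"
          by (simp only: integral_mult_right)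
        finally show ?thesis .
      qed
      also have "\<dots> = (\<Sum>j=1..N. a j * F j t)" unfolding F_def G_def
        by (simp add: sum_distrib_left algebra_simps)
      finally show ?thesis .
    qed
    have "(u has_real_derivative (- A * u t + integral {0..t} (\<lambda>s. Kker N a b (t - s) * u s))) (at t)"
      using u_ode[of t] that at_within_interior[of t "{0..}"] interior_real_atLeast[of 0] unfolding A_def by simp
    thus ?thesis unfolding conv .
  qed
  define Z where "Z = 1 + (\<Sum>j=1..N. a j * (\<Sum>i=1..j. 1 / b i))"
  have Znn: "(\<Sum>j=1..N. a j * (\<Sum>i=1..j. 1 / b i)) \<ge> 0"
  proof (rule sum_nonneg)
    fix j assume j: "j \<in> {1..N}"
    have "(\<Sum>i=1..j. 1 / b i) \<ge> 0"
    proof (rule sum_nonneg)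
      fix i assume "i \<in> {1..j}"
      hence "b i > 0" using b_pos j by auto
      thus "1 / b i \<ge> 0" by simp
    qed
    thus "a j * (\<Sum>i=1..j. 1 / b i) \<ge> 0" using a_nonneg[OF j] by simp
  qed
  hence Zpos: "Z > 0" unfolding Z_def by simp
  define c where "c = u0 / Z"
  define Q where "Q t = u t + (\<Sum>j=1..N. a j * (\<Sum>i=1..j. F i t / b i))" for t
  have Qc: "continuous_on {0..y} Q" for y
    unfolding Q_def by (intro continuous_intros ucont' Fc) (use bpos' in \<open>fastforce\<close>)
  have Qd: "(Q has_real_derivative 0) (at t)" if t: "t > 0" for t
  proof -
    have "(Q has_real_derivative (- A * u t + (\<Sum>j=1..N. a j * F j t)) + (\<Sum>j=1..N. a j * (\<Sum>i=1..j. b i * (X t (i-1) - F i t) / b i))) (at t)"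
      unfolding Q_def[abs_def]
      by (intro DERIV_add ud t DERIV_sum DERIV_cmult DERIV_cdivide Fd) auto
    moreover have "(\<Sum>j=1..N. a j * (\<Sum>i=1..j. b i * (X t (i-1) - F i t) / b i)) = (\<Sum>j=1..N. a j * (u t - F j t))"
    proof (rule sum.cong[OF refl])
      fix j assume j: "j \<in> {1..N}"
      have "(\<Sum>i=1..j. b i * (X t (i-1) - F i t) / b i) = (\<Sum>i=1..j. X t (i-1) - X t i)"
      proof (rule sum.cong[OF refl])
        fix i assume i: "i \<in> {1..j}"
        have "b i > 0" by (rule bpos'[OF j i])
        thus "b i * (X t (i-1) - F i t) / b i = X t (i-1) - X t i" using i by (simp add: X_def)
      qed
      also have "\<dots> = - (\<Sum>i=1..j. X t i - X t (i-1))" by (simp add: sum_negf[symmetric])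
      also have "\<dots> = u t - F j t" unfolding telescope using j by (simp add: X_def)
      finally show "a j * (\<Sum>i=1..j. b i * (X t (i-1) - F i t) / b i) = a j * (u t - F j t)" by simp
    qed
    moreover have "- A * u t + (\<Sum>j=1..N. a j * F j t) + (\<Sum>j=1..N. a j * (u t - F j t)) = 0"
      unfolding A_def by (simp add: sum_distrib_right right_diff_distrib sum_subtractf)
    ultimately show ?thesis by simp
  qed
  have Qconst: "Q t = u0" if t: "t \<ge> 0" for t
  proof -
    have "Q 0 \<le> Q t" by (rule DERIV_nonneg_imp_increasing_open[OF t _ Qc]) (use Qd in auto)
    moreover have "Q t \<le> Q 0" by (rule DERIV_nonpos_imp_decreasing_open[OF t _ Qc]) (use Qd in auto)
    moreover have "Q 0 = u0" unfolding Q_def using u_init F0 by simp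
    ultimately show ?thesis by simp
  qed
  have mean: "(X t 0 - c) + (\<Sum>j=1..N. a j * (\<Sum>i=1..j. (X t i - c) / b i)) = 0" if t: "t \<ge> 0" for t
  proof -
    have "(\<Sum>j=1..N. a j * (\<Sum>i=1..j. (X t i - c) / b i)) = (\<Sum>j=1..N. a j * (\<Sum>i=1..j. F i t / b i) - c * (a j * (\<Sum>i=1..j. 1 / b i)))"
    proof (rule sum.cong[OF refl])
      fix j assume j: "j \<in> {1..N}"
      have "(\<Sum>i=1..j. (X t i - c) / b i) = (\<Sum>i=1..j. F i t / b i - c * (1 / b i))"
        by (rule sum.cong[OF refl]) (auto simp: X_def diff_divide_distrib)
      also have "\<dots> = (\<Sum>i=1..j. F i t / b i) - c * (\<Sum>i=1..j. 1 / b i)"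
        by (simp add: sum_subtractf sum_distrib_left)
      finally have h: "(\<Sum>i=1..j. (X t i - c) / b i) = (\<Sum>i=1..j. F i t / b i) - c * (\<Sum>i=1..j. 1 / b i)" .
      show "a j * (\<Sum>i=1..j. (X t i - c) / b i) = a j * (\<Sum>i=1..j. F i t / b i) - c * (a j * (\<Sum>i=1..j. 1 / b i))"
        unfolding h by (simp add: algebra_simps)
    qed
    also have "\<dots> = (\<Sum>j=1..N. a j * (\<Sum>i=1..j. F i t / b i)) - c * (Z - 1)"
      unfolding Z_def by (simp add: sum_subtractf sum_distrib_left)
    finally have "(X t 0 - c) + (\<Sum>j=1..N. a j * (\<Sum>i=1..j. (X t i - c) / b i)) = Q t - c * Z"
      unfolding Q_def X_def by (simp add: algebra_simps)
    also have "\<dots> = 0" using Qconst[OF t] Zpos unfolding c_def by simp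
    finally show ?thesis .
  qed
  define C where "C = 1 + (\<Sum>i=1..N. real i / b i)"
  have Cpos: "C > 0"
  proof -
    have "(\<Sum>i=1..N. real i / b i) \<ge> 0"
      by (rule sum_nonneg) (use b_pos in \<open>auto intro: divide_nonneg_pos\<close>)
    thus ?thesis unfolding C_def by simp
  qed
  define V where "V t = (u t - c)^2 + (\<Sum>j=1..N. a j * (\<Sum>i=1..j. (F i t - c)^2 / b i))" for t
  have Vc: "continuous_on {0..y} V" for y
    unfolding V_def by (intro continuous_intros ucont' Fc) (use bpos' in \<open>fastforce\<close>)
  have Vd: "\<exists>D. (V has_real_derivative D) (at t) \<and> D \<le> - V t / C" if t: "t > 0" for t
  proof -
    have d1: "(V has_real_derivative (2 * (u t - c) * (- A * u t + (\<Sum>j=1..N. a j * F j t))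
       + (\<Sum>j=1..N. a j * (\<Sum>i=1..j. 2 * (F i t - c) * (b i * (X t (i-1) - F i t)) / b i)))) (at t)"
      unfolding V_def[abs_def]
      by (intro DERIV_add sq_deriv ud t DERIV_sum DERIV_cmult DERIV_cdivide Fd) auto
    have d2: "2 * (u t - c) * (- A * u t + (\<Sum>j=1..N. a j * F j t))
       + (\<Sum>j=1..N. a j * (\<Sum>i=1..j. 2 * (F i t - c) * (b i * (X t (i-1) - F i t)) / b i))
       = 2 * (X t 0 - c) * (- (\<Sum>j=1..N. a j) * X t 0 + (\<Sum>j=1..N. a j * X t j))
      + (\<Sum>j=1..N. a j * (\<Sum>i=1..j. 2 * (X t i - c) * (X t (i-1) - X t i)))"
    proof -
      have s1: "(\<Sum>j=1..N. a j * F j t) = (\<Sum>j=1..N. a j * X t j)"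
        by (rule sum.cong[OF refl]) (auto simp: X_def)
      have s2: "(\<Sum>j=1..N. a j * (\<Sum>i=1..j. 2 * (F i t - c) * (b i * (X t (i-1) - F i t)) / b i))
          = (\<Sum>j=1..N. a j * (\<Sum>i=1..j. 2 * (X t i - c) * (X t (i-1) - X t i)))"
      proof (rule sum.cong[OF refl])
        fix j assume j: "j \<in> {1..N}"
        have "(\<Sum>i=1..j. 2 * (F i t - c) * (b i * (X t (i-1) - F i t)) / b i)
            = (\<Sum>i=1..j. 2 * (X t i - c) * (X t (i-1) - X t i))"
        proof (rule sum.cong[OF refl])
          fix i assume i: "i \<in> {1..j}"
          hence "b i > 0" using b_pos j by auto
          thus "2 * (F i t - c) * (b i * (X t (i-1) - F i t)) / b i = 2 * (X t i - c) * (X t (i-1) - X t i)"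
            using i by (simp add: X_def)
        qed
        thus "a j * (\<Sum>i=1..j. 2 * (F i t - c) * (b i * (X t (i-1) - F i t)) / b i)
            = a j * (\<Sum>i=1..j. 2 * (X t i - c) * (X t (i-1) - X t i))" by simp
      qed
      show ?thesis unfolding s1 s2 A_def by (simp add: X_def)
    qed
    have d3: "2 * (X t 0 - c) * (- (\<Sum>j=1..N. a j) * X t 0 + (\<Sum>j=1..N. a j * X t j))
      + (\<Sum>j=1..N. a j * (\<Sum>i=1..j. 2 * (X t i - c) * (X t (i-1) - X t i)))
      \<le> - ((X t 0 - c)^2 + (\<Sum>j=1..N. a j * (\<Sum>i=1..j. (X t i - c)^2 / b i))) / C"
      unfolding C_def by (rule lyap[OF a_nonneg b_pos mean]) (use t in auto)
    have d4: "(X t 0 - c)^2 + (\<Sum>j=1..N. a j * (\<Sum>i=1..j. (X t i - c)^2 / b i)) = V t"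
    proof -
      have "(\<Sum>j=1..N. a j * (\<Sum>i=1..j. (X t i - c)^2 / b i)) = (\<Sum>j=1..N. a j * (\<Sum>i=1..j. (F i t - c)^2 / b i))"
        by (intro sum.cong refl arg_cong2[where f="(*)"]) (auto simp: X_def)
      thus ?thesis unfolding V_def X_def by simp
    qed
    have "(V has_real_derivative (2 * (X t 0 - c) * (- (\<Sum>j=1..N. a j) * X t 0 + (\<Sum>j=1..N. a j * X t j))
      + (\<Sum>j=1..N. a j * (\<Sum>i=1..j. 2 * (X t i - c) * (X t (i-1) - X t i))))) (at t)"
      using d1 unfolding d2 .
    thus ?thesis using d3 unfolding d4 by blast
  qed
  have sqV: "(u t - c)^2 \<le> V t" for t
  proof -
    have "(\<Sum>j=1..N. a j * (\<Sum>i=1..j. (F i t - c)^2 / b i)) \<ge> 0"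
    proof (rule sum_nonneg)
      fix j assume j: "j \<in> {1..N}"
      have "(\<Sum>i=1..j. (F i t - c)^2 / b i) \<ge> 0"
      proof (rule sum_nonneg)
        fix i assume "i \<in> {1..j}"
        hence "b i > 0" using bpos' j by blast
        thus "(F i t - c)^2 / b i \<ge> 0" by simp
      qed
      thus "a j * (\<Sum>i=1..j. (F i t - c)^2 / b i) \<ge> 0" using a_nonneg[OF j] by simp
    qed
    thus ?thesis unfolding V_def by simp
  qed
  define \<Phi> where "\<Phi> t = exp (t / C) * V t" for t
  have \<Phi>c: "continuous_on {0..y} \<Phi>" for y
    unfolding \<Phi>_def by (intro continuous_intros Vc) (use Cpos in auto)
  have \<Phi>dec: "\<Phi> t \<le> \<Phi> 0" if t0: "t \<ge> 0" for t
  proof (rule DERIV_nonpos_imp_decreasing_open[OF t0 _ \<Phi>c])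
    fix x :: real assume x: "0 < x" "x < t"
    obtain D where D: "(V has_real_derivative D) (at x)" "D \<le> - V x / C" using Vd[OF x(1)] by blast
    have E: "((\<lambda>t. exp (t / C)) has_real_derivative exp (x / C) * (1 / C)) (at x)"
      by (rule DERIV_chain2[OF DERIV_exp DERIV_cdivide[OF DERIV_ident]])
    have "(\<Phi> has_real_derivative (exp (x / C) * (1 / C) * V x + D * exp (x / C))) (at x)"
      unfolding \<Phi>_def[abs_def] by (rule DERIV_mult[OF E D(1)])
    moreover have "exp (x / C) * (1 / C) * V x + D * exp (x / C) \<le> 0"
    proof -
      have "exp (x / C) * (1 / C) * V x + D * exp (x / C) = exp (x / C) * (V x / C + D)"
        by (simp add: algebra_simps)
      moreover have "V x / C + D \<le> 0" using D(2) by simp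
      ultimately show ?thesis by (simp add: mult_nonneg_nonpos)
    qed
    ultimately show "\<exists>y. (\<Phi> has_real_derivative y) (at x) \<and> y \<le> 0" by blast
  qed
  have Vbound: "V t \<le> V 0 * exp (- t / C)" if t0: "t \<ge> 0" for t
  proof -
    have "exp (t / C) * V t \<le> V 0" using \<Phi>dec[OF t0] unfolding \<Phi>_def by simp
    hence "exp (- t / C) * (exp (t / C) * V t) \<le> exp (- t / C) * V 0" by (simp add: mult_left_mono)
    moreover have "exp (- t / C) * (exp (t / C) * V t) = V t"
    proof -
      have ee: "exp (- t / C) * exp (t / C) = 1" by (simp add: exp_add[symmetric])
      show ?thesis by (simp only: mult.assoc[symmetric] ee mult_1_left)
    qed
    ultimately have "V t \<le> exp (- t / C) * V 0" by linarith
    thus ?thesis by (metis mult.commute)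
  qed
  have lim2: "((\<lambda>t. (u t - c)^2) \<longlongrightarrow> 0) at_top"
  proof (rule tendsto_sandwich[of "\<lambda>_. 0" _ _ "\<lambda>t. V 0 * exp (- t / C)"])
    show "\<forall>\<^sub>F t in at_top. 0 \<le> (u t - c)^2" by simp
    show "\<forall>\<^sub>F t in at_top. (u t - c)^2 \<le> V 0 * exp (- t / C)"
      using eventually_ge_at_top[of "0::real"] by eventually_elim (use sqV Vbound in \<open>blast intro: order_trans\<close>)
    show "((\<lambda>_. 0) \<longlongrightarrow> (0::real)) at_top" by simp
    show "((\<lambda>t. V 0 * exp (- t / C)) \<longlongrightarrow> 0) at_top"
      using tendsto_mult_right_zero[OF exp_lim[OF Cpos]] by simp
  qed
  have "((\<lambda>t. sqrt ((u t - c)^2)) \<longlongrightarrow> sqrt 0) at_top" by (rule tendsto_real_sqrt[OF lim2])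
  hence "((\<lambda>t. \<bar>u t - c\<bar>) \<longlongrightarrow> 0) at_top" by simp
  hence "((\<lambda>t. u t - c) \<longlongrightarrow> 0) at_top" by (simp only: tendsto_rabs_zero_iff)
  hence "(u \<longlongrightarrow> c) at_top" by (rule LIM_zero_cancel)
  moreover have "c = u0 / (1 + (\<Sum>i=1..N. (1 / b i) * (\<Sum>j=i..N. a j)))"
    unfolding c_def Z_def swap_sum ..
  ultimately show ?thesis by simp
qed


end
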